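(* If $X$ and $Y$ are uncountable Polish spaces, then $\mathfrak{s}(X)=\mathfrak{s}(Y)$.
   Context: For infinite sets $U, A$, say $U$ splits $A$ if both $A\cap U$ and $A\setminus U$ are infinite. For a topological space $X$, $\mathfrak{s}(X)$ is the smallest cardinality of a family $\mathcal{U}$ of open subsets of $X$ such that every infinite $A\subseteq X$ is split by some $U\in\mathcal{U}$. *)

theory Defs
  imports "HOL-Analysis.Analysis"
begin

unbundle cardinal_syntax

definition Polish_space :: "'a topology \<Rightarrow> bool" where
  "Polish_space X \<longleftrightarrow> completely_metrizable_space X \<and> separable_space X"

definition splits :: "'a set \<Rightarrow> 'a set \<Rightarrow> bool" where
  "splits U A \<longleftrightarrow> infinite (A \<inter> U) \<and> infinite (A - U)"

definition splitting_family :: "'a topology \<Rightarrow> 'a set set \<Rightarrow> bool" where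
  "splitting_family X \<U> \<longleftrightarrow>
     (\<forall>U\<in>\<U>. openin X U) \<and>
     (\<forall>A. A \<subseteq> topspace X \<and> infinite A \<longrightarrow> (\<exists>U\<in>\<U>. splits U A))"

text \<open>The cardinal s(X): the cardinality of a splitting family of minimal cardinality
  (represented as a cardinal order, compared across types with =o).\<close>
definition splitting_number :: "'a topology \<Rightarrow> 'a set rel" where
  "splitting_number X =
     |SOME \<U>. splitting_family X \<U> \<and> (\<forall>\<V>. splitting_family X \<V> \<longrightarrow> |\<U>| \<le>o |\<V>| )|"

end

theory Submission imports Defs begin

lemma splits_mono: "splits U B \<Longrightarrow> B \<subseteq> A \<Longrightarrow> splits U A"
  unfolding splits_def using infinite_super[of "B \<inter> U" "A \<inter> U"] infinite_super[of "B - U" "A - U"] by blast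

lemma splits_inj_preimage:
  assumes "inj_on f A" "splits U (f ` A)" "\<And>a. a \<in> A \<Longrightarrow> a \<in> W \<longleftrightarrow> f a \<in> U"
  shows "splits W A"
proof -
  have 1: "f ` (A \<inter> W) = f ` A \<inter> U" using assms(3) by auto
  have 2: "f ` (A - W) = f ` A - U" using assms(3) by auto
  show ?thesis using assms(2) 1 2 unfolding splits_def by (metis finite_imageI)
qed

lemma min_card_exists:
  assumes "P x"
  shows "\<exists>y. P y \<and> (\<forall>z. P z \<longrightarrow> |y| \<le>o |z| )"
proof -
  define Q where "Q = { |y| | y. P y}"
  have xQ: "|x| \<in> Q" using assms unfolding Q_def by blast
  have "\<exists>m\<in>Q. \<forall>r. (r, m) \<in> ordLess \<longrightarrow> r \<notin> Q"
    by (rule wf_eq_minimal[THEN iffD1, OF wf_ordLess, rule_format, OF xQ])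
  then obtain m where m: "m \<in> Q" "\<And>r. (r, m) \<in> ordLess \<Longrightarrow> r \<notin> Q" by blast
  then obtain y where y: "P y" "m = |y|" unfolding Q_def by blast
  have H: "|y| \<le>o |z|" if z: "P z" for z
  proof -
    have "|z| \<in> Q" using z unfolding Q_def by blast
    then have "\<not> ( |z| <o m)" using m(2) by blast
    then have "\<not> ( |z| <o |y| )" using y(2) by simp
    then show ?thesis using ordLess_or_ordLeq[OF card_of_Well_order card_of_Well_order, of z y] by blast
  qed
  show ?thesis
    by (rule exI[of _ y], rule conjI[OF y(1)], intro allI impI, erule H)
qed

lemma card_T_exists:
  fixes V :: "'b set"
  assumes "uncountable V"
  shows "\<exists>T::real set. uncountable T \<and> |T| \<le>o |V|"
proof -
  have "|V| \<le>o |UNIV::real set| \<or> |UNIV::real set| \<le>o |V|"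
    by (rule ordLeq_total[OF card_of_Well_order card_of_Well_order])
  then show ?thesis
  proof
    assume "|V| \<le>o |UNIV::real set|"
    then obtain h where h: "inj_on h V" "h ` V \<subseteq> (UNIV::real set)"
      using card_of_ordLeq[of V "UNIV::real set"] by blast
    have "uncountable (h ` V)"
    proof
      assume "countable (h ` V)"
      then have "countable V" using countable_image_inj_on h(1) by blast
      then show False using assms by simp
    qed
    then show ?thesis using card_of_image[of h V] by (intro exI[of _ "h ` V"]) simp
  next
    assume "|UNIV::real set| \<le>o |V|"
    then show ?thesis using uncountable_UNIV_real by (intro exI[of _ UNIV]) simp
  qed
qed

lemma card_times_le:
  assumes "|T| \<le>o |V|" "|W| \<le>o |V|" "infinite V"
  shows "|T \<times> W| \<le>o |V|"
proof -
  have "|T \<times> W| \<le>o |V \<times> W|" using card_of_Times_mono1 assms(1) by blast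
  also have "|V \<times> W| \<le>o |V \<times> V|" using card_of_Times_mono2 assms(2) by blast
  also have "|V \<times> V| \<le>o |V|" using card_of_Times_same_infinite assms(3) ordIso_iff_ordLeq by blast
  finally show ?thesis .
qed

definition CT :: "(nat \<Rightarrow> bool) topology" where
  "CT = product_topology (\<lambda>_. discrete_topology UNIV) UNIV"

lemma topspace_CT [simp]: "topspace CT = UNIV"
  by (simp add: CT_def)

lemma cyl_open: "openin CT {\<tau>. \<forall>i<n. \<tau> i = \<sigma> i}"
proof (induction n)
  case 0
  have "{\<tau>::nat\<Rightarrow>bool. \<forall>i<0. \<tau> i = \<sigma> i} = topspace CT" by simp
  then show ?case by (simp only:) (rule openin_topspace)
next
  case (Suc n)
  have "openin CT {x \<in> topspace CT. x n \<in> {\<sigma> n}}"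
    by (rule openin_continuous_map_preimage[of _ "discrete_topology UNIV"])
       (auto simp: CT_def intro: continuous_map_product_projection)
  then have op: "openin CT {\<tau>. \<tau> n = \<sigma> n}" by simp
  have eq: "{\<tau>. \<forall>i<Suc n. \<tau> i = \<sigma> i} = {\<tau>. \<forall>i<n. \<tau> i = \<sigma> i} \<inter> {\<tau>. \<tau> n = \<sigma> n}"
    by (auto simp: less_Suc_eq)
  show ?case unfolding eq by (rule openin_Int[OF Suc op])
qed

context Metric_space
begin

lemma countable_not_splitting:
  assumes x: "x \<in> M" and nis: "\<forall>\<epsilon>>0. \<exists>y\<in>M. y \<noteq> x \<and> d x y < \<epsilon>" and cU: "countable \<U>"
  shows "\<exists>A \<subseteq> M. infinite A \<and> (\<forall>U\<in>\<U>. \<not> splits U A)"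
proof -
  define lp where "lp S \<longleftrightarrow> (\<forall>\<epsilon>>0. \<exists>y\<in>S. y \<noteq> x \<and> d x y < \<epsilon>)" for S
  obtain UU :: "nat \<Rightarrow> 'a set" where UU: "\<forall>U\<in>\<U>. \<exists>n. UU n = U"
  proof (cases "\<U> = {}")
    case True then show ?thesis using that by blast
  next
    case False then show ?thesis using that from_nat_into_surj[OF cU] by metis
  qed
  define T where "T = rec_nat M (\<lambda>n S. if lp (S \<inter> UU n) then S \<inter> UU n else S - UU n)"
  have T0: "T 0 = M" by (simp add: T_def)
  have TS: "T (Suc n) = (if lp (T n \<inter> UU n) then T n \<inter> UU n else T n - UU n)" for n
    by (simp add: T_def)
  have lpT: "lp (T n)" for n
  proof (induction n)
    case 0 show ?case using nis by (simp add: T0 lp_def)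
  next
    case (Suc n)
    show ?case
    proof (cases "lp (T n \<inter> UU n)")
      case True then show ?thesis by (simp add: TS)
    next
      case False
      then obtain e1 where e1: "e1>0" "\<forall>y\<in>T n \<inter> UU n. y \<noteq> x \<longrightarrow> e1 \<le> d x y"
        unfolding lp_def by (auto simp: not_less)
      have "lp (T n - UU n)" unfolding lp_def
      proof (intro allI impI)
        fix \<epsilon>::real assume "\<epsilon>>0"
        then have "min \<epsilon> e1 > 0" using e1 by simp
        then obtain y where y: "y \<in> T n" "y \<noteq> x" "d x y < min \<epsilon> e1" using Suc[unfolded lp_def] by blast
        then have "y \<notin> UU n" using e1 by force
        then show "\<exists>y\<in>T n - UU n. y \<noteq> x \<and> d x y < \<epsilon>" using y by auto
      qed
      then show ?thesis using False by (simp add: TS)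
    qed
  qed
  have Tdec: "T (Suc n) \<subseteq> T n" for n by (simp add: TS) 
  have TM: "T n \<subseteq> M" for n
    by (induction n) (use T0 Tdec in auto)
  have Tmono: "m \<le> n \<Longrightarrow> T n \<subseteq> T m" for m n
  proof -
    have "decseq T" using Tdec by (intro decseq_SucI) blast
    then show "m \<le> n \<Longrightarrow> T n \<subseteq> T m" using decseqD by blast
  qed
  have "\<forall>n. \<forall>e>0. \<exists>y. y \<in> T n \<and> y \<noteq> x \<and> d x y < e" using lpT unfolding lp_def by blast
  then obtain g where g: "\<And>n e. e > 0 \<Longrightarrow> g n e \<in> T n \<and> g n e \<noteq> x \<and> d x (g n e) < e" by metis
  define a where "a = rec_nat (g 1 1) (\<lambda>n b. g (Suc (Suc n)) (d x b))"
  have a0: "a 0 = g 1 1" and aS: "a (Suc n) = g (Suc (Suc n)) (d x (a n))" for n by (simp_all add: a_def)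
  have ainv: "a n \<in> T (Suc n) \<and> a n \<noteq> x \<and> 0 < d x (a n)" for n
  proof (induction n)
    case 0
    have "a 0 \<in> T 1 \<and> a 0 \<noteq> x" using g[of 1 1] a0 by simp
    moreover then have "a 0 \<in> M" using TM by blast
    ultimately show ?case using x zero nonneg by (metis One_nat_def less_eq_real_def)
  next
    case (Suc n)
    have "a (Suc n) \<in> T (Suc (Suc n)) \<and> a (Suc n) \<noteq> x" using g Suc aS by simp
    moreover then have "a (Suc n) \<in> M" using TM by blast
    ultimately show ?case using x zero nonneg by (metis less_eq_real_def)
  qed
  have adec: "d x (a (Suc n)) < d x (a n)" for n using g ainv aS by simp
  have alt: "m < n \<Longrightarrow> d x (a n) < d x (a m)" for m n
    using lift_Suc_mono_less[of "\<lambda>n. - d x (a n)"] adec by force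
  have ainj: "inj a"
  proof (rule injI)
    fix m n assume "a m = a n"
    then show "m = n" using alt[of m n] alt[of n m] by (cases m n rule: linorder_cases) auto
  qed
  define A where "A = range a"
  have "A \<subseteq> M" unfolding A_def using ainv TM by blast
  moreover have "infinite A" unfolding A_def by (rule range_inj_infinite[OF ainj])
  moreover have "\<not> splits U A" if U: "U \<in> \<U>" for U
  proof -
    obtain n where n: "UU n = U" using UU U by blast
    have ak: "a k \<in> T (Suc n)" if "n \<le> k" for k
    proof -
      have "a k \<in> T (Suc k)" using ainv by blast
      moreover have "T (Suc k) \<subseteq> T (Suc n)" using Tmono[of "Suc n" "Suc k"] that by simp
      ultimately show ?thesis by blast
    qed
    show ?thesis
    proof (cases "lp (T n \<inter> UU n)")
      case True
      then have TU: "T (Suc n) \<subseteq> U" using TS n by simp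
      have "A - U \<subseteq> a ` {..<n}"
      proof
        fix z assume z: "z \<in> A - U"
        then obtain k where k: "z = a k" unfolding A_def by blast
        have "\<not> n \<le> k" using ak[of k] TU z k by blast
        then show "z \<in> a ` {..<n}" using k by simp
      qed
      then have "finite (A - U)" by (rule finite_subset) simp
      then show ?thesis by (simp add: splits_def)
    next
      case False
      then have TU: "T (Suc n) \<inter> U = {}" using TS n by auto
      have "A \<inter> U \<subseteq> a ` {..<n}"
      proof
        fix z assume z: "z \<in> A \<inter> U"
        then obtain k where k: "z = a k" unfolding A_def by blast
        have "\<not> n \<le> k" using ak[of k] TU z k by blast
        then show "z \<in> a ` {..<n}" using k by simp
      qed
      then have "finite (A \<inter> U)" by (rule finite_subset) simp
      then show ?thesis by (simp add: splits_def)
    qed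
  qed
  ultimately show ?thesis by (intro exI[of _ A]) blast
qed

lemma sep_seq_splits:
  fixes a :: "nat \<Rightarrow> 'a"
  assumes ainj: "inj a" and aA: "range a \<subseteq> A" and AM: "A \<subseteq> M" and \<rho>: "\<forall>n. \<rho> n > 0"
    and sep: "\<forall>i j. i \<noteq> j \<longrightarrow> \<rho> i \<le> d (a i) (a j)"
  shows "\<exists>U. openin mtopology U \<and> splits U A"
proof -
  define U where "U = (\<Union>n. mball (a (2*n)) (\<rho> (2*n)))"
  have aM: "a n \<in> M" for n using aA AM by blast
  have "openin mtopology U" unfolding U_def by blast
  moreover have "splits U A"
  proof -
    have e: "range (\<lambda>n. a (2*n)) \<subseteq> A \<inter> U"
      using aA \<rho> aM unfolding U_def by fastforce
    have o: "range (\<lambda>n. a (2*n+1)) \<subseteq> A - U"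
    proof -
      have "a (2*n+1) \<notin> mball (a (2*m)) (\<rho> (2*m))" for n m
      proof -
        have "(2*m::nat) \<noteq> 2*n+1" by presburger
        then show ?thesis using sep by (auto simp: not_less)
      qed
      then show ?thesis using aA unfolding U_def by blast
    qed
    have "inj (\<lambda>n. a (2*n))" using ainj unfolding inj_def by (metis mult_left_cancel zero_neq_numeral)
    then have "infinite (range (\<lambda>n. a (2*n)))" using range_inj_infinite by blast
    moreover have "inj (\<lambda>n. a (2*n+1))" using ainj unfolding inj_def by (metis add_right_cancel mult_left_cancel zero_neq_numeral)
    then have "infinite (range (\<lambda>n. a (2*n+1)))" using range_inj_infinite by blast
    ultimately show ?thesis using e o unfolding splits_def using infinite_super by blast
  qed
  ultimately show ?thesis by blast
qed

lemma exists_splitter: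
  assumes AM: "A \<subseteq> M" and inf: "infinite A"
  shows "\<exists>U. openin mtopology U \<and> splits U A"
proof (cases "\<exists>x\<in>M. \<forall>\<epsilon>>0. \<exists>y\<in>A. y \<noteq> x \<and> d x y < \<epsilon>")
  case True
  then obtain x where x: "x \<in> M" "\<forall>\<epsilon>>0. \<exists>y\<in>A. y \<noteq> x \<and> d x y < \<epsilon>" by blast
  then obtain g where g: "\<And>e. e > 0 \<Longrightarrow> g e \<in> A \<and> g e \<noteq> x \<and> d x (g e) < e" by metis
  define b where "b = rec_nat (g 1) (\<lambda>n c. g (d x c / 2))"
  have b0: "b 0 = g 1" and bS: "b (Suc n) = g (d x (b n) / 2)" for n by (simp_all add: b_def)
  have pos: "y \<in> A \<Longrightarrow> y \<noteq> x \<Longrightarrow> 0 < d x y" for y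
    using AM x(1) zero nonneg by (metis less_eq_real_def subsetD)
  have binv: "b n \<in> A \<and> b n \<noteq> x \<and> 0 < d x (b n)" for n
  proof (induction n)
    case 0 then show ?case using g[of 1] b0 pos by simp
  next
    case (Suc n) then show ?case using g[of "d x (b n) / 2"] bS pos by simp
  qed
  define \<delta> where "\<delta> n = d x (b n)" for n
  have \<delta>S: "\<delta> (Suc n) < \<delta> n / 2" for n
  proof -
    have "0 < d x (b n) / 2" using binv[of n] by simp
    then have "d x (g (d x (b n) / 2)) < d x (b n) / 2" using g by blast
    then show ?thesis unfolding \<delta>_def by (simp add: bS)
  qed
  have \<delta>pos: "\<delta> n > 0" for n
  proof -
    have "0 < d x (b n)" using binv[of n] by blast
    then show ?thesis unfolding \<delta>_def .
  qed
  have \<delta>dec: "\<delta> (Suc n) < \<delta> n" for n using \<delta>S[of n] \<delta>pos[of n] by linarith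
  have \<delta>mono: "m \<le> n \<Longrightarrow> \<delta> n \<le> \<delta> m" for m n
  proof -
    have "decseq \<delta>" using \<delta>dec by (intro decseq_SucI) (simp add: less_imp_le)
    then show "m \<le> n \<Longrightarrow> \<delta> n \<le> \<delta> m" using decseqD by blast
  qed
  have \<delta>lt: "i < j \<Longrightarrow> \<delta> j < \<delta> i / 2" for i j
    using \<delta>mono[of "Suc i" j] \<delta>S[of i] by simp
  have bM: "b n \<in> M" for n using binv AM by blast
  have tri: "\<delta> i \<le> \<delta> j + d (b i) (b j)" for i j
    using triangle[OF x(1) bM[of j] bM[of i]] commute \<delta>_def by simp
  define \<rho> where "\<rho> n = \<delta> n / 4" for n
  have sep: "\<forall>i j. i \<noteq> j \<longrightarrow> \<rho> i \<le> d (b i) (b j)"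
  proof (intro allI impI)
    fix i j :: nat assume "i \<noteq> j"
    then consider "i < j" | "j < i" by linarith
    then show "\<rho> i \<le> d (b i) (b j)"
    proof cases
      case 1 then show ?thesis unfolding \<rho>_def using \<delta>lt[OF 1] tri[of i j] \<delta>pos[of i] by linarith
    next
      case 2 then show ?thesis unfolding \<rho>_def using \<delta>lt[OF 2] tri[of j i] \<delta>pos[of i] commute[of "b i" "b j"] by linarith
    qed
  qed
  have binj: "inj b"
  proof (rule injI)
    fix m n assume "b m = b n"
    then have "\<delta> m = \<delta> n" by (simp add: \<delta>_def)
    then show "m = n" using \<delta>lt[of m n] \<delta>lt[of n m] \<delta>pos[of m] \<delta>pos[of n]
      by (cases m n rule: linorder_cases) auto
  qed
  show ?thesis
    by (rule sep_seq_splits[OF binj _ AM _ sep]) (use binv \<delta>pos in \<open>auto simp: \<rho>_def\<close>)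
next
  case False
  have ex: "\<exists>\<epsilon>. \<epsilon>>0 \<and> (\<forall>y\<in>A. y \<noteq> x \<longrightarrow> \<epsilon> \<le> d x y)" if xM: "x \<in> M" for x
  proof -
    from False xM obtain \<epsilon> where e: "\<epsilon> > 0" "\<forall>y\<in>A. \<not> (y \<noteq> x \<and> d x y < \<epsilon>)" by blast
    then show ?thesis by (meson not_less)
  qed
  define E where "E x = (SOME \<epsilon>. \<epsilon>>0 \<and> (\<forall>y\<in>A. y \<noteq> x \<longrightarrow> \<epsilon> \<le> d x y))" for x
  have E: "E x > 0 \<and> (\<forall>y\<in>A. y \<noteq> x \<longrightarrow> E x \<le> d x y)" if "x \<in> M" for x
    unfolding E_def by (rule someI_ex[OF ex[OF that]])
  obtain b :: "nat \<Rightarrow> 'a" where b: "inj b" "range b \<subseteq> A" using infinite_countable_subset inf by blast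
  have bM: "b n \<in> M" for n using b AM by blast
  have sep: "\<forall>i j. i \<noteq> j \<longrightarrow> E (b i) \<le> d (b i) (b j)"
  proof (intro allI impI)
    fix i j :: nat assume "i \<noteq> j"
    then have "b j \<noteq> b i" using b(1) by (auto simp: inj_def)
    moreover have "b j \<in> A" using b(2) by blast
    ultimately show "E (b i) \<le> d (b i) (b j)" using E[OF bM[of i]] by blast
  qed
  show ?thesis
    by (rule sep_seq_splits[OF b(1) b(2) AM _ sep]) (use E bM in blast)
qed

lemma perfect_core:
  assumes D: "countable D" "D \<subseteq> M" "\<forall>x\<in>M. \<forall>r>0. \<exists>y\<in>D. d x y < r" and unc: "uncountable M"
  shows "\<exists>P \<subseteq> M. P \<noteq> {} \<and> (\<forall>x\<in>P. \<forall>\<epsilon>>0. \<exists>u\<in>P. \<exists>v\<in>P. u \<noteq> v \<and> d x u < \<epsilon> \<and> d x v < \<epsilon>)"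
proof -
  define P where "P = {x\<in>M. \<forall>\<epsilon>>0. uncountable (mball x \<epsilon>)}"
  define F where "F = (\<lambda>(q,r). if countable (mball q r) then mball q r else {})"
  have cF: "countable (\<Union>(F ` (D \<times> \<rat>)))"
    using D(1) countable_rat by (auto simp: F_def intro!: countable_UN)
  have "M - P \<subseteq> \<Union>(F ` (D \<times> \<rat>))"
  proof
    fix x assume x: "x \<in> M - P"
    then obtain \<epsilon> where e: "\<epsilon> > 0" "countable (mball x \<epsilon>)" unfolding P_def by blast
    obtain q where q: "q \<in> D" "d x q < \<epsilon>/3" using D(3) x e by (meson divide_pos_pos zero_less_numeral DiffD1)
    obtain r where r: "r \<in> \<rat>" "\<epsilon>/3 < r" "r < 2*\<epsilon>/3" using Rats_dense_in_real[of "\<epsilon>/3" "2*\<epsilon>/3"] e by auto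
    have qM: "q \<in> M" using q D(2) by blast
    have sub: "mball q r \<subseteq> mball x \<epsilon>"
    proof
      fix z assume "z \<in> mball q r"
      then have "z \<in> M" "d q z < r" by auto
      then show "z \<in> mball x \<epsilon>" using triangle[of x q z] x qM q r by auto
    qed
    then have "countable (mball q r)" using e countable_subset by blast
    moreover have "x \<in> mball q r" using x qM q r commute by auto
    ultimately have "x \<in> F (q,r)" by (simp add: F_def)
    then show "x \<in> \<Union>(F ` (D \<times> \<rat>))" using q r by blast
  qed
  then have cMP: "countable (M - P)" using cF countable_subset by blast
  have "P \<noteq> {}"
  proof
    assume "P = {}"
    then have "M - P = M" by simp
    then show False using cMP unc by simp
  qed
  moreover have "P \<subseteq> M" unfolding P_def by blast
  moreover have "\<exists>u\<in>P. \<exists>v\<in>P. u \<noteq> v \<and> d x u < \<epsilon> \<and> d x v < \<epsilon>" if x: "x \<in> P" "\<epsilon> > 0" for x \<epsilon>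
  proof -
    have u1: "uncountable (mball x \<epsilon>)" using x unfolding P_def by blast
    have sub: "mball x \<epsilon> \<subseteq> (mball x \<epsilon> \<inter> P) \<union> (M - P)" using mball_subset_mspace by blast
    have u2: "uncountable (mball x \<epsilon> \<inter> P)"
    proof
      assume "countable (mball x \<epsilon> \<inter> P)"
      then have "countable ((mball x \<epsilon> \<inter> P) \<union> (M - P))" using cMP by simp
      then have "countable (mball x \<epsilon>)" by (rule countable_subset[OF sub])
      then show False using u1 by simp
    qed
    then have "mball x \<epsilon> \<inter> P \<noteq> {}" by auto
    then obtain u where u: "u \<in> mball x \<epsilon> \<inter> P" by blast
    have "mball x \<epsilon> \<inter> P - {u} \<noteq> {}"
      using u2 countable_subset[of "mball x \<epsilon> \<inter> P" "{u}"] by auto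
    then obtain v where v: "v \<in> mball x \<epsilon> \<inter> P - {u}" by blast
    show ?thesis using u v by auto
  qed
  ultimately show ?thesis by (intro exI[of _ P] conjI ballI allI impI) auto
qed

lemma cantor_inj:
  assumes comp: "mcomplete" and P: "P \<subseteq> M" "P \<noteq> {}"
    and perf: "\<forall>x\<in>P. \<forall>\<epsilon>>0. \<exists>u\<in>P. \<exists>v\<in>P. u \<noteq> v \<and> d x u < \<epsilon> \<and> d x v < \<epsilon>"
  shows "\<exists>f. continuous_map CT mtopology f \<and> inj f"
proof -
  define Q where "Q c r t \<longleftrightarrow> (fst t \<in> P \<and> fst (snd t) \<in> P \<and> 0 < snd (snd t) \<and> snd (snd t) \<le> r/2 \<and>
     mcball (fst t) (snd (snd t)) \<subseteq> mcball c r \<and> mcball (fst (snd t)) (snd (snd t)) \<subseteq> mcball c r \<and>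
     mcball (fst t) (snd (snd t)) \<inter> mcball (fst (snd t)) (snd (snd t)) = {})" for c r and t :: "'a \<times> 'a \<times> real"
  have step: "\<exists>t. c \<in> P \<and> 0 < r \<longrightarrow> Q c r t" for c r
  proof (cases "c \<in> P \<and> 0 < r")
    case True
    then have cM: "c \<in> M" using P by blast
    obtain u v where uv: "u \<in> P" "v \<in> P" "u \<noteq> v" "d c u < r/2" "d c v < r/2"
      using perf True by (meson half_gt_zero)
    have uM: "u \<in> M" and vM: "v \<in> M" using uv P by auto
    have duv: "0 < d u v" using uv uM vM zero nonneg by (metis less_eq_real_def)
    define \<rho> where "\<rho> = min (r/2) (d u v / 3)"
    have \<rho>: "0 < \<rho>" "\<rho> \<le> r/2" "\<rho> \<le> d u v / 3" using duv True \<rho>_def by auto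
    have s1: "mcball u \<rho> \<subseteq> mcball c r"
    proof
      fix z assume "z \<in> mcball u \<rho>"
      then have "z \<in> M" "d u z \<le> \<rho>" by auto
      then show "z \<in> mcball c r" using triangle[of c u z] cM uM uv \<rho> by auto
    qed
    have s2: "mcball v \<rho> \<subseteq> mcball c r"
    proof
      fix z assume "z \<in> mcball v \<rho>"
      then have "z \<in> M" "d v z \<le> \<rho>" by auto
      then show "z \<in> mcball c r" using triangle[of c v z] cM vM uv \<rho> by auto
    qed
    have s3: "mcball u \<rho> \<inter> mcball v \<rho> = {}"
    proof (rule ccontr)
      assume "mcball u \<rho> \<inter> mcball v \<rho> \<noteq> {}"
      then obtain z where "z \<in> M" "d u z \<le> \<rho>" "d v z \<le> \<rho>" by auto
      then show False using triangle[of u z v] commute[of v z] uM vM \<rho> duv by auto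
    qed
    have "Q c r (u, v, \<rho>)" unfolding Q_def using uv \<rho> s1 s2 s3 by simp
    then show ?thesis by blast
  qed blast
  define F where "F c r = (SOME t. c \<in> P \<and> 0 < r \<longrightarrow> Q c r t)" for c r
  have F: "Q c r (F c r)" if "c \<in> P" "0 < r" for c r
    using someI_ex[OF step[of c r]] that unfolding F_def by blast
  obtain x0 where x0: "x0 \<in> P" using P by blast
  define nxt where "nxt b cr = (if b then (fst (F (fst cr) (snd cr)), snd (snd (F (fst cr) (snd cr))))
      else (fst (snd (F (fst cr) (snd cr))), snd (snd (F (fst cr) (snd cr)))))" for b and cr :: "'a \<times> real"
  define node where "node \<sigma> = rec_nat (x0, 1::real) (\<lambda>n cr. nxt (\<sigma> n) cr)" for \<sigma> :: "nat \<Rightarrow> bool"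
  have node0: "node \<sigma> 0 = (x0, 1)" and nodeS: "node \<sigma> (Suc n) = nxt (\<sigma> n) (node \<sigma> n)" for \<sigma> n
    by (simp_all add: node_def)
  define B where "B \<sigma> n = mcball (fst (node \<sigma> n)) (snd (node \<sigma> n))" for \<sigma> n
  have inv: "fst (node \<sigma> n) \<in> P \<and> 0 < snd (node \<sigma> n) \<and> snd (node \<sigma> n) \<le> (1/2)^n" for \<sigma> n
  proof (induction n)
    case 0 then show ?case using x0 node0 by simp
  next
    case (Suc n)
    then have "Q (fst (node \<sigma> n)) (snd (node \<sigma> n)) (F (fst (node \<sigma> n)) (snd (node \<sigma> n)))" using F by blast
    then show ?case using Suc unfolding Q_def by (auto simp: nodeS nxt_def)
  qed
  have BS: "B \<sigma> (Suc n) \<subseteq> B \<sigma> n" for \<sigma> n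
  proof -
    have "Q (fst (node \<sigma> n)) (snd (node \<sigma> n)) (F (fst (node \<sigma> n)) (snd (node \<sigma> n)))" using F inv by blast
    then show ?thesis unfolding Q_def B_def by (auto simp: nodeS nxt_def)
  qed
  have Bmono: "m \<le> n \<Longrightarrow> B \<sigma> n \<subseteq> B \<sigma> m" for \<sigma> m n
  proof -
    have "decseq (B \<sigma>)" using BS by (intro decseq_SucI) blast
    then show "m \<le> n \<Longrightarrow> B \<sigma> n \<subseteq> B \<sigma> m" using decseqD by blast
  qed
  have cB: "fst (node \<sigma> n) \<in> B \<sigma> n" for \<sigma> n
    using inv[of \<sigma> n] P unfolding B_def by auto
  have Bdiam: "y \<in> B \<sigma> n \<Longrightarrow> z \<in> B \<sigma> n \<Longrightarrow> d y z \<le> 2 * (1/2)^n" for y z \<sigma> n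
  proof -
    assume y: "y \<in> B \<sigma> n" and z: "z \<in> B \<sigma> n"
    let ?c = "fst (node \<sigma> n)" and ?r = "snd (node \<sigma> n)"
    have "?c \<in> M" "y \<in> M" "z \<in> M" "d ?c y \<le> ?r" "d ?c z \<le> ?r" using y z unfolding B_def by auto
    then have "d y z \<le> 2 * ?r" using triangle[of y ?c z] commute[of y ?c] by auto
    then show ?thesis using inv[of \<sigma> n] by auto
  qed
  have small: "\<exists>n. 2 * (1/2)^n < e" if epos: "e > 0" for e :: real
  proof -
    obtain n where "(1/2::real)^n < e/2" using real_arch_pow_inv[of "e/2" "1/2"] epos by auto
    then have "2 * (1/2::real)^n < e" by simp
    then show ?thesis by blast
  qed
  have Cauchy: "MCauchy (\<lambda>n. fst (node \<sigma> n))" for \<sigma>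
    unfolding MCauchy_def
  proof (intro conjI allI impI)
    show "range (\<lambda>n. fst (node \<sigma> n)) \<subseteq> M" using inv P by blast
    fix e :: real assume "e > 0"
    then obtain N where N: "2 * (1/2)^N < e" using small by blast
    show "\<exists>N. \<forall>n n'. N \<le> n \<longrightarrow> N \<le> n' \<longrightarrow> d (fst (node \<sigma> n)) (fst (node \<sigma> n')) < e"
    proof (intro exI allI impI)
      fix n n' assume "N \<le> n" "N \<le> n'"
      then have "fst (node \<sigma> n) \<in> B \<sigma> N" "fst (node \<sigma> n') \<in> B \<sigma> N" using cB Bmono by blast+
      then show "d (fst (node \<sigma> n)) (fst (node \<sigma> n')) < e" using Bdiam N by (meson le_less_trans)
    qed
  qed
  define f where "f \<sigma> = (SOME l. limitin mtopology (\<lambda>n. fst (node \<sigma> n)) l sequentially)" for \<sigma>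
  have flim: "limitin mtopology (\<lambda>n. fst (node \<sigma> n)) (f \<sigma>) sequentially" for \<sigma>
    using comp Cauchy unfolding mcomplete_def f_def by (meson someI_ex)
  have fB: "f \<sigma> \<in> B \<sigma> n" for \<sigma> n
  proof (rule limitin_closedin[OF flim])
    show "closedin mtopology (B \<sigma> n)" unfolding B_def by simp
    show "\<forall>\<^sub>F m in sequentially. fst (node \<sigma> m) \<in> B \<sigma> n"
      unfolding eventually_sequentially using cB Bmono by blast
  qed simp
  have agree: "(\<forall>i<n. \<sigma> i = \<tau> i) \<Longrightarrow> node \<sigma> n = node \<tau> n" for \<sigma> \<tau> n
    by (induction n) (auto simp: node0 nodeS)
  have "inj f"
  proof (rule injI)
    fix \<sigma> \<tau> assume eq: "f \<sigma> = f \<tau>"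
    show "\<sigma> = \<tau>"
    proof (rule ccontr)
      assume "\<sigma> \<noteq> \<tau>"
      then have ex: "\<exists>i. \<sigma> i \<noteq> \<tau> i" by auto
      define n where "n = (LEAST i. \<sigma> i \<noteq> \<tau> i)"
      have n1: "\<sigma> n \<noteq> \<tau> n" using LeastI_ex[OF ex] n_def by blast
      have n2: "\<forall>i<n. \<sigma> i = \<tau> i" using not_less_Least n_def by blast
      have nn: "node \<sigma> n = node \<tau> n" using agree n2 by blast
      let ?c = "fst (node \<sigma> n)" and ?r = "snd (node \<sigma> n)"
      have Qt: "Q ?c ?r (F ?c ?r)" using F inv by blast
      let ?u = "fst (F ?c ?r)" and ?v = "fst (snd (F ?c ?r))" and ?\<rho> = "snd (snd (F ?c ?r))"
      have dj: "mcball ?u ?\<rho> \<inter> mcball ?v ?\<rho> = {}" using Qt unfolding Q_def by blast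
      have Bs: "B \<sigma> (Suc n) = (if \<sigma> n then mcball ?u ?\<rho> else mcball ?v ?\<rho>)"
        by (simp add: B_def nodeS nxt_def)
      have Bt: "B \<tau> (Suc n) = (if \<tau> n then mcball ?u ?\<rho> else mcball ?v ?\<rho>)"
        by (simp add: B_def nodeS nxt_def nn)
      have disj: "B \<sigma> (Suc n) \<inter> B \<tau> (Suc n) = {}"
      proof (cases "\<sigma> n")
        case True
        have "B \<sigma> (Suc n) = mcball ?u ?\<rho>" using Bs True by simp
        moreover have "B \<tau> (Suc n) = mcball ?v ?\<rho>" using Bt True n1 by simp
        ultimately show ?thesis using dj by (simp only:)
      next
        case False
        have "B \<sigma> (Suc n) = mcball ?v ?\<rho>" using Bs False by simp
        moreover have "B \<tau> (Suc n) = mcball ?u ?\<rho>" using Bt False n1 by simp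
        ultimately show ?thesis using dj by (metis Int_commute)
      qed
      have "f \<sigma> \<in> B \<sigma> (Suc n) \<inter> B \<tau> (Suc n)" using fB[of \<sigma> "Suc n"] fB[of \<tau> "Suc n"] eq by simp
      then show False using disj by simp
    qed
  qed
  moreover have "continuous_map CT mtopology f"
    unfolding continuous_map_to_metric
  proof (intro ballI allI impI)
    fix \<sigma> :: "nat \<Rightarrow> bool" and e :: real assume "e > 0"
    then obtain n where n: "2 * (1/2)^n < e" using small by blast
    define U where "U = {\<tau>. \<forall>i<n. \<tau> i = \<sigma> i}"
    have "openin CT U" unfolding U_def by (rule cyl_open)
    moreover have "\<sigma> \<in> U" unfolding U_def by simp
    moreover have "\<forall>\<tau>\<in>U. f \<tau> \<in> mball (f \<sigma>) e"
    proof
      fix \<tau> assume tU: "\<tau> \<in> U"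
      have agr: "\<forall>i<n. \<tau> i = \<sigma> i" using tU unfolding U_def by simp
      have nn: "node \<tau> n = node \<sigma> n" by (rule agree[OF agr])
      have Bt: "B \<tau> n = B \<sigma> n" unfolding B_def nn ..
      have ft: "f \<tau> \<in> B \<sigma> n" using fB[of \<tau> n] unfolding Bt .
      have fs: "f \<sigma> \<in> B \<sigma> n" by (rule fB)
      have dd: "d (f \<sigma>) (f \<tau>) \<le> 2 * (1/2)^n" by (rule Bdiam[OF fs ft])
      have "f \<sigma> \<in> M" "f \<tau> \<in> M" using fs ft unfolding B_def by auto
      then show "f \<tau> \<in> mball (f \<sigma>) e" using dd n by simp
    qed
    ultimately show "\<exists>U. openin CT U \<and> \<sigma> \<in> U \<and> (\<forall>y\<in>U. f y \<in> mball (f \<sigma>) e)" by blast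
  qed
  ultimately show ?thesis by (intro exI[of _ f]) simp
qed

lemma cont_ind:
  assumes "c \<in> M" "S \<subseteq> {y. d y c \<noteq> r}"
  shows "continuous_map (subtopology mtopology S) (discrete_topology UNIV) (\<lambda>y. d y c < r)"
  unfolding continuous_map_def
proof (intro conjI allI impI)
  show "(\<lambda>y. d y c < r) \<in> topspace (subtopology mtopology S) \<rightarrow> topspace (discrete_topology UNIV)" by simp
  fix U :: "bool set"
  define Ob where "Ob = (if True \<in> U then mball c r else {}) \<union> (if False \<in> U then M - mcball c r else {})"
  have "openin mtopology Ob" unfolding Ob_def
    by (intro openin_Un) (auto intro: openin_diff)
  moreover have "{x \<in> topspace (subtopology mtopology S). (d x c < r) \<in> U} = Ob \<inter> S"
  proof (intro set_eqI iffI)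
    fix x assume "x \<in> {x \<in> topspace (subtopology mtopology S). (d x c < r) \<in> U}"
    then have x: "x \<in> M" "x \<in> S" "(d x c < r) \<in> U" by (auto simp: topspace_subtopology)
    have ne: "d x c \<noteq> r" using assms(2) x(2) by blast
    have cx: "d c x = d x c" by (rule commute)
    show "x \<in> Ob \<inter> S"
    proof (cases "d x c < r")
      case True
      then have "True \<in> U" using x(3) by simp
      moreover have "x \<in> mball c r" using x(1) assms(1) True cx by simp
      ultimately show ?thesis unfolding Ob_def using x(2) by simp
    next
      case False
      then have "False \<in> U" using x(3) by simp
      moreover have "x \<in> M - mcball c r" using x(1) assms(1) False ne cx by simp
      ultimately show ?thesis unfolding Ob_def using x(2) by simp
    qed
  next
    fix x assume x: "x \<in> Ob \<inter> S"
    have cx: "d c x = d x c" by (rule commute)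
    have xM: "x \<in> M" using x unfolding Ob_def by (auto split: if_splits)
    have "(d x c < r) \<in> U"
    proof (cases "x \<in> mball c r")
      case True
      then have "True \<in> U" using x unfolding Ob_def by (auto split: if_splits)
      moreover have "d x c < r" using True cx by simp
      ultimately show ?thesis by simp
    next
      case False
      then have "x \<in> M - mcball c r" "False \<in> U" using x assms(1) unfolding Ob_def by (auto split: if_splits)
      moreover have "\<not> d x c < r" using calculation(1) cx assms(1) by auto
      ultimately show ?thesis by simp
    qed
    then show "x \<in> {x \<in> topspace (subtopology mtopology S). (d x c < r) \<in> U}"
      using xM x by (simp add: topspace_subtopology)
  qed
  ultimately show "openin (subtopology mtopology S) {x \<in> topspace (subtopology mtopology S). (d x c < r) \<in> U}"
    by (auto simp: openin_subtopology)
qed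

lemma splitting_from_CT:
  assumes D: "countable D" "D \<subseteq> M" "\<forall>x\<in>M. \<forall>r>0. \<exists>y\<in>D. d x y < r"
    and VC: "splitting_family CT \<V>" and T: "uncountable (T::real set)"
  shows "\<exists>\<U>. splitting_family mtopology \<U> \<and> |\<U>| \<le>o |T \<times> \<V>|"
proof (cases "M = {}")
  case True
  have "splitting_family mtopology {}" unfolding splitting_family_def
    unfolding topspace_mtopology using True by auto
  then show ?thesis using card_of_empty by blast
next
  case False
  then obtain x0 where "x0 \<in> M" by blast
  then obtain y0 where "y0 \<in> D" using D(3) by (meson zero_less_one)
  then have Dne: "D \<noteq> {}" by blast
  define p where "p = from_nat_into D"
  have pD: "p k \<in> D" for k unfolding p_def by (rule from_nat_into[OF Dne])
  have pM: "p k \<in> M" for k using pD D(2) by blast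
  have psurj: "\<exists>k. p k = y" if "y \<in> D" for y unfolding p_def by (rule from_nat_into_surj[OF D(1) that])
  define qs where "qs = from_nat_into (\<rat>::real set)"
  have qsurj: "\<exists>j. qs j = q" if "q \<in> \<rat>" for q unfolding qs_def by (rule from_nat_into_surj[OF countable_rat that])
  define K where "K m = fst (prod_decode m)" for m
  define J where "J m = snd (prod_decode m)" for m
  have KJ: "K (prod_encode (k, j)) = k \<and> J (prod_encode (k, j)) = j" for k j
    unfolding K_def J_def by simp
  define \<psi> where "\<psi> t y = (\<lambda>m. d y (p (K m)) < qs (J m) + t)" for t y
  define G where "G t = {y\<in>M. \<forall>m. d y (p (K m)) \<noteq> qs (J m) + t}" for t
  have GM: "G t \<subseteq> M" for t unfolding G_def by blast
  have inj: "inj_on (\<psi> t) M" for t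
  proof (rule inj_onI)
    fix y y' assume y: "y \<in> M" "y' \<in> M" "\<psi> t y = \<psi> t y'"
    show "y = y'"
    proof (rule ccontr)
      assume ne: "y \<noteq> y'"
      define \<delta> where "\<delta> = d y y'"
      have "d y y' \<noteq> 0" using y(1,2) ne by simp
      then have \<delta>: "\<delta> > 0" unfolding \<delta>_def using nonneg[of y y'] by linarith
      have "\<delta>/3 > 0" using \<delta> by simp
      then obtain z where z: "z \<in> D" "d y z < \<delta>/3" using D(3) y(1) by blast
      have zM: "z \<in> M" using z D(2) by blast
      obtain k where k: "p k = z" using psurj[OF z(1)] by blast
      have "\<delta> \<le> d y z + d z y'" unfolding \<delta>_def by (rule triangle[OF y(1) zM y(2)])
      moreover have "d z y' = d y' z" by (rule commute)
      ultimately have far: "d y z < d y' z" using z(2) \<delta> by linarith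
      then have "d y z - t < d y' z - t" by simp
      then obtain q where q: "q \<in> \<rat>" "d y z - t < q" "q < d y' z - t"
        using Rats_dense_in_real by blast
      obtain j where j: "qs j = q" using qsurj[OF q(1)] by blast
      define m where "m = prod_encode (k, j)"
      have m: "K m = k" "J m = j" unfolding m_def using KJ by simp_all
      have "\<psi> t y m" unfolding \<psi>_def using m j k q by simp
      moreover have "\<not> \<psi> t y' m" unfolding \<psi>_def using m j k q by simp
      ultimately show False using y(3) by simp
    qed
  qed
  have cont: "continuous_map (subtopology mtopology (G t)) CT (\<psi> t)" for t
    unfolding CT_def continuous_map_componentwise_UNIV
  proof
    fix m
    have "G t \<subseteq> {y. d y (p (K m)) \<noteq> qs (J m) + t}" unfolding G_def by blast
    then show "continuous_map (subtopology mtopology (G t)) (discrete_topology UNIV) (\<lambda>y. \<psi> t y m)"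
      unfolding \<psi>_def by (rule cont_ind[OF pM])
  qed
  define W where "W t U = (SOME W. openin mtopology W \<and>
       {y \<in> topspace (subtopology mtopology (G t)). \<psi> t y \<in> U} = W \<inter> G t)" for t U
  have W: "openin mtopology (W t U) \<and> {y \<in> topspace (subtopology mtopology (G t)). \<psi> t y \<in> U} = W t U \<inter> G t"
    if oU: "openin CT U" for t U
  proof -
    have "openin (subtopology mtopology (G t)) {y \<in> topspace (subtopology mtopology (G t)). \<psi> t y \<in> U}"
      by (rule openin_continuous_map_preimage[OF cont oU])
    then have "\<exists>W. openin mtopology W \<and> {y \<in> topspace (subtopology mtopology (G t)). \<psi> t y \<in> U} = W \<inter> G t"
      unfolding openin_subtopology by blast
    then show ?thesis unfolding W_def by (rule someI_ex)
  qed
  define \<U> where "\<U> = (\<lambda>(t,U). W t U) ` (T \<times> \<V>)"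
  have "splitting_family mtopology \<U>"
    unfolding splitting_family_def
  proof (intro conjI allI impI ballI)
    fix Wx assume "Wx \<in> \<U>"
    then obtain tU where tU: "tU \<in> T \<times> \<V>" "Wx = (\<lambda>(t,U). W t U) tU" unfolding \<U>_def by (rule imageE)
    obtain t U where tU2: "tU = (t, U)" by (cases tU)
    have tU: "Wx = W t U" "U \<in> \<V>" using tU tU2 by auto
    have "openin CT U" using VC tU(2) unfolding splitting_family_def by blast
    then show "openin mtopology Wx" using W tU(1) by blast
  next
    fix A assume A: "A \<subseteq> topspace mtopology \<and> infinite A"
    obtain g :: "nat \<Rightarrow> 'a" where g: "inj g" "range g \<subseteq> A"
      using infinite_countable_subset A by blast
    define A0 where "A0 = range g"
    have cA0: "countable A0" unfolding A0_def by simp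
    define Bad where "Bad = (\<lambda>(a,m). d a (p (K m)) - qs (J m)) ` (A0 \<times> (UNIV::nat set))"
    have "countable (A0 \<times> (UNIV::nat set))" using cA0 by simp
    then have cBad: "countable Bad" unfolding Bad_def by (rule countable_image)
    have "\<not> T \<subseteq> Bad"
    proof
      assume "T \<subseteq> Bad"
      then have "countable T" using cBad countable_subset by blast
      then show False using T by simp
    qed
    then obtain t where t: "t \<in> T" "t \<notin> Bad" by blast
    have A0A: "A0 \<subseteq> A" unfolding A0_def using g(2) .
    have A0M: "A0 \<subseteq> M" using A0A A by auto
    have A0G: "A0 \<subseteq> G t"
    proof
      fix a assume a: "a \<in> A0"
      have "d a (p (K m)) \<noteq> qs (J m) + t" for m
      proof
        assume "d a (p (K m)) = qs (J m) + t"
        then have "t = d a (p (K m)) - qs (J m)" by simp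
        then have "t \<in> Bad" unfolding Bad_def using a by force
        then show False using t(2) by blast
      qed
      then show "a \<in> G t" unfolding G_def using a A0M by blast
    qed
    have infA0: "infinite A0" unfolding A0_def by (rule range_inj_infinite[OF g(1)])
    have injA0: "inj_on (\<psi> t) A0" by (rule inj_on_subset[OF inj A0M])
    have "infinite (\<psi> t ` A0)"
    proof
      assume "finite (\<psi> t ` A0)"
      then have "finite A0" using finite_imageD injA0 by blast
      then show False using infA0 by simp
    qed
    moreover have "\<psi> t ` A0 \<subseteq> topspace CT" by simp
    ultimately obtain U where U: "U \<in> \<V>" "splits U (\<psi> t ` A0)"
      using VC unfolding splitting_family_def by blast
    have oU: "openin CT U" using VC U(1) unfolding splitting_family_def by blast
    have eqW: "{y \<in> topspace (subtopology mtopology (G t)). \<psi> t y \<in> U} = W t U \<inter> G t"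
      using W[OF oU] by blast
    have mem: "a \<in> W t U \<longleftrightarrow> \<psi> t a \<in> U" if a: "a \<in> A0" for a
    proof -
      have aG: "a \<in> G t" using a A0G by blast
      have aT: "a \<in> topspace (subtopology mtopology (G t))" using aG GM by (auto simp: topspace_subtopology)
      show ?thesis
      proof
        assume "a \<in> W t U"
        then have "a \<in> W t U \<inter> G t" using aG by blast
        then show "\<psi> t a \<in> U" unfolding eqW[symmetric] by blast
      next
        assume "\<psi> t a \<in> U"
        then have "a \<in> {y \<in> topspace (subtopology mtopology (G t)). \<psi> t y \<in> U}" using aT by blast
        then show "a \<in> W t U" unfolding eqW by blast
      qed
    qed
    have "splits (W t U) A0" by (rule splits_inj_preimage[OF injA0 U(2) mem])
    then have "splits (W t U) A" by (rule splits_mono[OF _ A0A])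
    moreover have "W t U \<in> \<U>" unfolding \<U>_def using t(1) U(1) by force
    ultimately show "\<exists>U\<in>\<U>. splits U A" by blast
  qed
  moreover have "|\<U>| \<le>o |T \<times> \<V>|" unfolding \<U>_def by (rule card_of_image)
  ultimately show ?thesis by blast
qed

end


lemma Polish_metric:
  assumes "Polish_space X"
  shows "\<exists>M d D. Metric_space M d \<and> Metric_space.mcomplete M d \<and> X = Metric_space.mtopology M d \<and>
     countable D \<and> D \<subseteq> M \<and> (\<forall>x\<in>M. \<forall>r>0. \<exists>y\<in>D. d x y < r)"
proof -
  from assms obtain M d where m: "Metric_space M d" "Metric_space.mcomplete M d" "X = Metric_space.mtopology M d"
    unfolding Polish_space_def completely_metrizable_space_def by blast
  interpret Metric_space M d by (rule m(1))
  from assms obtain C where C: "countable C" "C \<subseteq> topspace X" "X closure_of C = topspace X"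
    unfolding Polish_space_def separable_space_def by blast
  have CM: "C \<subseteq> M" using C(2) unfolding m(3) by simp
  have eq: "{x \<in> M. \<forall>r>0. \<exists>y \<in> C. y \<in> mball x r} = M"
    using C(3) unfolding m(3) metric_closure_of by simp
  have dense: "\<forall>x\<in>M. \<forall>r>0. \<exists>y\<in>C. d x y < r"
  proof (intro ballI allI impI)
    fix x and r :: real assume x: "x \<in> M" and r: "r > 0"
    then have "x \<in> {x \<in> M. \<forall>r>0. \<exists>y \<in> C. y \<in> mball x r}" using eq by simp
    then obtain y where "y \<in> C" "y \<in> mball x r" using r by blast
    then show "\<exists>y\<in>C. d x y < r" by auto
  qed
  show ?thesis using m C(1) CM dense by blast
qed

lemma Polish_split_exists:
  assumes "Polish_space X"
  shows "\<exists>\<U>. splitting_family X \<U>"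
proof -
  obtain M d where m: "Metric_space M d" "X = Metric_space.mtopology M d"
    using Polish_metric[OF assms] by blast
  interpret Metric_space M d by (rule m(1))
  have "splitting_family mtopology {U. openin mtopology U}"
    unfolding splitting_family_def
  proof (intro conjI allI impI ballI)
    fix U assume "U \<in> {U. openin mtopology U}"
    then show "openin mtopology U" by simp
  next
    fix A assume A: "A \<subseteq> topspace mtopology \<and> infinite A"
    then have "A \<subseteq> M" "infinite A" by auto
    then obtain U where "openin mtopology U" "splits U A" using exists_splitter by blast
    then show "\<exists>U\<in>{U. openin mtopology U}. splits U A" by blast
  qed
  then show ?thesis unfolding m(2) by blast
qed

lemma main_le:
  fixes X :: "'a topology" and Y :: "'b topology" and \<V> :: "'b set set"
  assumes X: "Polish_space X" and Y: "Polish_space Y" and uY: "uncountable (topspace Y)"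
    and V: "splitting_family Y \<V>"
  shows "\<exists>\<U>. splitting_family X \<U> \<and> |\<U>| \<le>o |\<V>|"
proof -
  obtain M' d' D' where Y1: "Metric_space M' d'" "Metric_space.mcomplete M' d'" "Y = Metric_space.mtopology M' d'"
    and D': "countable D'" "D' \<subseteq> M'" "\<forall>x\<in>M'. \<forall>r>0. \<exists>y\<in>D'. d' x y < r"
    using Polish_metric[OF Y] by blast
  interpret MY: Metric_space M' d' by (rule Y1(1))
  have uM': "uncountable M'" using uY unfolding Y1(3) by simp
  obtain P where P: "P \<subseteq> M'" "P \<noteq> {}" "\<forall>x\<in>P. \<forall>\<epsilon>>0. \<exists>u\<in>P. \<exists>v\<in>P. u \<noteq> v \<and> d' x u < \<epsilon> \<and> d' x v < \<epsilon>"
    using MY.perfect_core[OF D' uM'] by blast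
  obtain f where f: "continuous_map CT MY.mtopology f" "inj f"
    using MY.cantor_inj[OF Y1(2) P] by blast
  have Vunc: "uncountable \<V>"
  proof
    assume cV: "countable \<V>"
    obtain x where x: "x \<in> P" using P(2) by blast
    have xM: "x \<in> M'" using x P(1) by blast
    have nis: "\<forall>\<epsilon>>0. \<exists>y\<in>M'. y \<noteq> x \<and> d' x y < \<epsilon>"
    proof (intro allI impI)
      fix \<epsilon>::real assume "\<epsilon>>0"
      then obtain u v where uv: "u\<in>P" "v\<in>P" "u\<noteq>v" "d' x u < \<epsilon>" "d' x v < \<epsilon>" using P(3) x by blast
      show "\<exists>y\<in>M'. y \<noteq> x \<and> d' x y < \<epsilon>"
      proof (cases "u = x")
        case True
        have "v \<in> M'" using uv(2) P(1) by blast
        moreover have "v \<noteq> x" using True uv(3) by simp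
        ultimately show ?thesis using uv(5) by (intro bexI[of _ v]) simp_all
      next
        case False
        have "u \<in> M'" using uv(1) P(1) by blast
        then show ?thesis using uv(4) False by (intro bexI[of _ u]) simp_all
      qed
    qed
    obtain A where A: "A \<subseteq> M'" "infinite A" "\<forall>U\<in>\<V>. \<not> splits U A"
      using MY.countable_not_splitting[OF xM nis cV] by blast
    have "A \<subseteq> topspace Y" using A(1) unfolding Y1(3) by simp
    then obtain U where "U \<in> \<V>" "splits U A" using V A(2) unfolding splitting_family_def by blast
    then show False using A(3) by blast
  qed
  obtain T :: "real set" where T: "uncountable T" "|T| \<le>o |\<V>|" using card_T_exists[OF Vunc] by blast
  define \<V>C where "\<V>C = (\<lambda>V. {\<sigma>. f \<sigma> \<in> V}) ` \<V>"
  have VC: "splitting_family CT \<V>C"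
    unfolding splitting_family_def
  proof (intro conjI allI impI ballI)
    fix U assume "U \<in> \<V>C"
    then obtain V0 where V0: "V0 \<in> \<V>" "U = {\<sigma>. f \<sigma> \<in> V0}" unfolding \<V>C_def by blast
    have "openin Y V0" using V V0(1) unfolding splitting_family_def by blast
    then have "openin CT {\<sigma> \<in> topspace CT. f \<sigma> \<in> V0}"
      using openin_continuous_map_preimage[OF f(1)] unfolding Y1(3) by blast
    then show "openin CT U" using V0(2) by simp
  next
    fix A :: "(nat \<Rightarrow> bool) set" assume A: "A \<subseteq> topspace CT \<and> infinite A"
    have fA: "f ` A \<subseteq> topspace Y"
      using continuous_map_image_subset_topspace[OF f(1)] unfolding Y1(3) by auto
    have injA: "inj_on f A" using f(2) by (simp add: inj_on_def inj_def)
    have "infinite (f ` A)"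
    proof
      assume "finite (f ` A)"
      then have "finite A" using finite_imageD injA by blast
      then show False using A by simp
    qed
    then obtain V0 where V0: "V0 \<in> \<V>" "splits V0 (f ` A)" using V fA unfolding splitting_family_def by blast
    have "splits {\<sigma>. f \<sigma> \<in> V0} A" by (rule splits_inj_preimage[OF injA V0(2)]) simp
    moreover have "{\<sigma>. f \<sigma> \<in> V0} \<in> \<V>C" unfolding \<V>C_def using V0(1) by blast
    ultimately show "\<exists>U\<in>\<V>C. splits U A" by blast
  qed
  obtain M d D where X1: "Metric_space M d" "X = Metric_space.mtopology M d"
    and D: "countable D" "D \<subseteq> M" "\<forall>x\<in>M. \<forall>r>0. \<exists>y\<in>D. d x y < r"
    using Polish_metric[OF X] by blast
  interpret MX: Metric_space M d by (rule X1(1))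
  obtain \<U> where U: "splitting_family MX.mtopology \<U>" "|\<U>| \<le>o |T \<times> \<V>C|"
    using MX.splitting_from_CT[OF D VC T(1)] by blast
  have "|\<V>C| \<le>o |\<V>|" unfolding \<V>C_def by (rule card_of_image)
  moreover have "infinite \<V>" using Vunc countable_finite by blast
  ultimately have "|T \<times> \<V>C| \<le>o |\<V>|" using card_times_le[OF T(2)] by blast
  then have "|\<U>| \<le>o |\<V>|" using U(2) ordLeq_transitive by blast
  then show ?thesis using U(1) unfolding X1(2) by blast
qed

lemma splitting_number_le:
  fixes X :: "'a topology" and Y :: "'b topology"
  assumes X: "Polish_space X" and Y: "Polish_space Y" and uY: "uncountable (topspace Y)"
  shows "splitting_number X \<le>o splitting_number Y"
proof -
  define SX where "SX = (SOME \<U>. splitting_family X \<U> \<and> (\<forall>\<V>. splitting_family X \<V> \<longrightarrow> |\<U>| \<le>o |\<V>| ))"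
  define SY where "SY = (SOME \<U>. splitting_family Y \<U> \<and> (\<forall>\<V>. splitting_family Y \<V> \<longrightarrow> |\<U>| \<le>o |\<V>| ))"
  obtain UX where "splitting_family X UX" using Polish_split_exists[OF X] by blast
  then have "\<exists>\<U>. splitting_family X \<U> \<and> (\<forall>\<V>. splitting_family X \<V> \<longrightarrow> |\<U>| \<le>o |\<V>| )"
    by (rule min_card_exists)
  then have hX: "splitting_family X SX \<and> (\<forall>\<V>. splitting_family X \<V> \<longrightarrow> |SX| \<le>o |\<V>| )"
    unfolding SX_def by (rule someI_ex)
  obtain UY where "splitting_family Y UY" using Polish_split_exists[OF Y] by blast
  then have "\<exists>\<U>. splitting_family Y \<U> \<and> (\<forall>\<V>. splitting_family Y \<V> \<longrightarrow> |\<U>| \<le>o |\<V>| )"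
    by (rule min_card_exists)
  then have hY: "splitting_family Y SY \<and> (\<forall>\<V>. splitting_family Y \<V> \<longrightarrow> |SY| \<le>o |\<V>| )"
    unfolding SY_def by (rule someI_ex)
  obtain \<U> where U: "splitting_family X \<U>" "|\<U>| \<le>o |SY|"
    using main_le[OF X Y uY] hY by blast
  have "|SX| \<le>o |\<U>|" using hX U(1) by blast
  then have "|SX| \<le>o |SY|" using U(2) ordLeq_transitive by blast
  then show ?thesis unfolding splitting_number_def SX_def SY_def .
qed

theorem theorem2p5:
  fixes X :: "'a topology" and Y :: "'b topology"
  assumes "Polish_space X" and "uncountable (topspace X)"
      and "Polish_space Y" and "uncountable (topspace Y)"
  shows "splitting_number X =o splitting_number Y"
proof -
  have "splitting_number X \<le>o splitting_number Y"
    by (rule splitting_number_le[OF assms(1) assms(3) assms(4)])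
  moreover have "splitting_number Y \<le>o splitting_number X"
    by (rule splitting_number_le[OF assms(3) assms(1) assms(2)])
  ultimately show ?thesis using ordIso_iff_ordLeq by blast
qed


end
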